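(* Let $d$ and $s$ be integers with $0\le s\le d-1$. There are a positive integer $r=r(d,s)$ and constants $0<c_1\le c_2$ depending only on $d$ and $s$ such that the following holds. Let $\Lambda\subseteq\mathbb{R}^d$ be a $d$-dimensional lattice with $\lambda_d(\Lambda,B^d)\le 1$, and write $\lambda_i=\lambda_i(\Lambda,B^d)$. Then there exist $s$ vectors $b_1,\dots,b_s\in\Lambda$, a $(d-s)$-dimensional linear subspace $N$ of $\mathbb{R}^d$ with $\mathbb{R}^d=\mathrm{lin}(b_1,\dots,b_s)\oplus N$, and the projection $p$ of $\mathbb{R}^d$ onto $N$ along $\mathrm{lin}(b_1,\dots,b_s)$, such that $p(\Lambda\cap B^d)\subseteq\Lambda\cap N\cap B^d(r)$ and \[c_1\lambda_{i+s}\le\lambda_i(\Lambda\cap N,\,B^d(r)\cap N)\le c_2\lambda_{i+s}\quad\text{for every } i\in\{1,\dots,d-s\}.\]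
   Context: $B^d(r)$ is the closed Euclidean ball of radius $r$ centered at the origin, $B^d=B^d(1)$. A $d$-dimensional lattice is the set of all integer linear combinations of $d$ linearly independent vectors of $\mathbb{R}^d$; $\Lambda\cap N$ is regarded as a $(d-s)$-dimensional lattice in $N$ and $B^d(r)\cap N$ as a convex body in $N$. For a lattice $\Lambda$ and a compact convex body $K$ symmetric about the origin, the $i$th successive minimum is $\lambda_i(\Lambda,K)=\inf\{\lambda\in\mathbb{R}:\dim(\Lambda\cap(\lambda K))\ge i\}$. $\mathrm{lin}$ denotes linear hull. *)

theory Defs
  imports "HOL-Analysis.Analysis"
begin

definition lattice_of_rank :: "nat \<Rightarrow> 'a::euclidean_space set \<Rightarrow> bool" where
  "lattice_of_rank k L \<longleftrightarrow>
     (\<exists>B. finite B \<and> independent B \<and> card B = k \<and>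
          L = {\<Sum>b\<in>B. of_int (c b) *\<^sub>R b | c. True})"

definition full_lattice :: "'a::euclidean_space set \<Rightarrow> bool" where
  "full_lattice L \<longleftrightarrow> lattice_of_rank DIM('a) L"

definition lattice_in :: "'a::euclidean_space set \<Rightarrow> 'a set \<Rightarrow> bool" where
  "lattice_in N L \<longleftrightarrow> L \<subseteq> N \<and> lattice_of_rank (dim N) L"

definition succ_min :: "nat \<Rightarrow> 'a::euclidean_space set \<Rightarrow> 'a set \<Rightarrow> real" where
  "succ_min i L K = Inf {t. t > 0 \<and> dim (L \<inter> ((\<lambda>x. t *\<^sub>R x) ` K)) \<ge> i}"

definition proj_along :: "'a::real_vector set \<Rightarrow> 'a set \<Rightarrow> 'a \<Rightarrow> 'a" where
  "proj_along N S x = (THE y. y \<in> N \<and> x - y \<in> span S)"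

end

theory Submission
  imports Defs
begin


lemma span_image_sum:
  fixes f :: "nat \<Rightarrow> 'a::real_vector"
  assumes "finite I"
  shows "span (f ` I) = {\<Sum>i\<in>I. c i *\<^sub>R f i | c. True}"
  using assms
proof (induction I rule: finite_induct)
  case empty
  then show ?case by simp
next
  case (insert i I)
  show ?case
  proof (intro set_eqI iffI)
    fix x assume "x \<in> span (f ` insert i I)"
    then obtain k where "x - k *\<^sub>R f i \<in> span (f ` I)"
      by (auto simp: span_insert)
    then obtain c where c: "x - k *\<^sub>R f i = (\<Sum>j\<in>I. c j *\<^sub>R f j)"
      using insert.IH by auto
    have e: "(\<Sum>j\<in>I. (c(i := k)) j *\<^sub>R f j) = (\<Sum>j\<in>I. c j *\<^sub>R f j)"
      using insert.hyps by (intro sum.cong) auto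
    have "(\<Sum>j\<in>insert i I. (c(i := k)) j *\<^sub>R f j) = k *\<^sub>R f i + (\<Sum>j\<in>I. c j *\<^sub>R f j)"
      using insert.hyps e by (simp add: sum.insert)
    also have "\<dots> = x" unfolding c[symmetric] by simp
    finally have "x = (\<Sum>j\<in>insert i I. (c(i := k)) j *\<^sub>R f j)" by simp
    then show "x \<in> {\<Sum>i\<in>insert i I. c i *\<^sub>R f i | c. True}" by blast
  next
    fix x assume "x \<in> {\<Sum>i\<in>insert i I. c i *\<^sub>R f i | c. True}"
    then obtain c where c: "x = (\<Sum>j\<in>insert i I. c j *\<^sub>R f j)" by blast
    have "x - c i *\<^sub>R f i = (\<Sum>j\<in>I. c j *\<^sub>R f j)"
      using insert.hyps c by (simp add: sum.insert)
    then have "x - c i *\<^sub>R f i \<in> span (f ` I)"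
      using insert.IH by blast
    then show "x \<in> span (f ` insert i I)"
      unfolding image_insert span_insert by blast
  qed
qed

lemma span_lessThan_sum:
  fixes f :: "nat \<Rightarrow> 'a::real_vector"
  shows "x \<in> span (f ` {..<n}) \<longleftrightarrow> (\<exists>c. x = (\<Sum>i<n. c i *\<^sub>R f i))"
  using span_image_sum[of "{..<n}" f] by auto

definition indep_seq :: "(nat \<Rightarrow> 'a::real_vector) \<Rightarrow> nat \<Rightarrow> bool" where
  "indep_seq f n \<longleftrightarrow> (\<forall>c. (\<Sum>k<n. c k *\<^sub>R f k) = 0 \<longrightarrow> (\<forall>k<n. c k = 0))"

lemma indep_seqD:
  assumes "indep_seq f n" "(\<Sum>k<n. c k *\<^sub>R f k) = 0" "k < n"
  shows "c k = 0"
  using assms unfolding indep_seq_def by blast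

lemma indep_seq_gen:
  assumes "indep_seq f n" "I \<subseteq> {..<n}" "(\<Sum>k\<in>I. c k *\<^sub>R f k) = 0" "k \<in> I"
  shows "c k = 0"
proof -
  have "(\<Sum>k<n. (if k \<in> I then c k else 0) *\<^sub>R f k) = (\<Sum>k<n. if k \<in> I then c k *\<^sub>R f k else 0)"
    by (intro sum.cong) auto
  also have "\<dots> = (\<Sum>k\<in>{..<n} \<inter> I. c k *\<^sub>R f k)"
    by (rule sum.inter_restrict[symmetric]) simp
  also have "{..<n} \<inter> I = I" using assms(2) by auto
  finally have "(\<Sum>k<n. (if k \<in> I then c k else 0) *\<^sub>R f k) = 0" using assms(3) by simp
  moreover have "k < n" using assms(2,4) by auto
  ultimately have "(if k \<in> I then c k else 0) = 0" by (rule indep_seqD[OF assms(1)])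
  then show ?thesis using assms(4) by simp
qed

lemma indep_seq_inj:
  assumes "indep_seq f n"
  shows "inj_on f {..<n}"
proof (rule inj_onI)
  fix i j assume ij: "i \<in> {..<n}" "j \<in> {..<n}" "f i = f j"
  show "i = j"
  proof (rule ccontr)
    assume "i \<noteq> j"
    have "(\<Sum>k\<in>{i,j}. (if k = i then 1 else -1) *\<^sub>R f k) = 0"
      using \<open>i \<noteq> j\<close> ij by simp
    from indep_seq_gen[OF assms _ this, of i] ij show False by auto
  qed
qed

lemma indep_seq_independent:
  fixes f :: "nat \<Rightarrow> 'a::euclidean_space"
  assumes "indep_seq f n" "I \<subseteq> {..<n}"
  shows "independent (f ` I)" "card (f ` I) = card I"
proof -
  have inj: "inj_on f I" using indep_seq_inj[OF assms(1)] assms(2) inj_on_subset by blast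
  have fin: "finite I" using assms(2) finite_subset by blast
  show "card (f ` I) = card I" using inj by (simp add: card_image)
  have "finite (f ` I) \<and> (\<forall>c. (\<Sum>v\<in>f ` I. c v *\<^sub>R v) = 0 \<longrightarrow> (\<forall>v\<in>f ` I. c v = 0))"
  proof (intro conjI allI impI ballI)
    show "finite (f ` I)" using fin by simp
    fix c v assume c: "(\<Sum>v\<in>f ` I. c v *\<^sub>R v) = 0" and v: "v \<in> f ` I"
    then obtain k where k: "k \<in> I" "v = f k" by auto
    have "(\<Sum>k\<in>I. c (f k) *\<^sub>R f k) = 0" using c by (simp add: sum.reindex[OF inj])
    from indep_seq_gen[OF assms(1,2) this k(1)] show "c v = 0" using k by simp
  qed
  then show "independent (f ` I)" by (rule independent_explicit[THEN iffD2])
qed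

lemma indep_seq_notin_span:
  assumes "\<And>k. k < n \<Longrightarrow> f k \<notin> span (f ` {..<k})"
  shows "indep_seq f n"
  using assms
proof (induction n)
  case 0
  then show ?case by (simp add: indep_seq_def)
next
  case (Suc n)
  have IH: "indep_seq f n" using Suc by auto
  show ?case unfolding indep_seq_def
  proof (intro allI impI)
    fix c k assume c: "(\<Sum>k<Suc n. c k *\<^sub>R f k) = 0" and k: "k < Suc n"
    have cn: "c n = 0"
    proof (rule ccontr)
      assume "c n \<noteq> 0"
      have "c n *\<^sub>R f n = - (\<Sum>k<n. c k *\<^sub>R f k)" using c by (simp add: eq_neg_iff_add_eq_0 add.commute)
      then have "f n = (\<Sum>k<n. (- c k / c n) *\<^sub>R f k)"
      proof -
        have "f n = (1 / c n) *\<^sub>R (c n *\<^sub>R f n)" using \<open>c n \<noteq> 0\<close> by simp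
        also have "\<dots> = (\<Sum>k<n. ((1 / c n) * (- c k)) *\<^sub>R f k)"
          unfolding \<open>c n *\<^sub>R f n = _\<close> by (simp add: scaleR_sum_right sum_negf)
        finally show ?thesis by simp
      qed
      then have "\<exists>c'. f n = (\<Sum>k<n. c' k *\<^sub>R f k)" by (rule exI[of _ "\<lambda>k. - c k / c n"])
      then have "f n \<in> span (f ` {..<n})" using span_lessThan_sum[of "f n" f n] by (simp only:)
      then show False using Suc.prems by auto
    qed
    then have "(\<Sum>k<n. c k *\<^sub>R f k) = 0" using c by simp
    then have "\<And>k. k < n \<Longrightarrow> c k = 0" using indep_seqD[OF IH] by blast
    then show "c k = 0" using cn k less_Suc_eq by auto
  qed
qed

lemma scale_cball_subspace:
  fixes N :: "'a::real_normed_vector set"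
  assumes "t > 0" "subspace N"
  shows "(\<lambda>x. t *\<^sub>R x) ` (cball 0 r \<inter> N) = cball 0 (t * r) \<inter> N"
proof (intro set_eqI iffI)
  fix y assume "y \<in> (\<lambda>x. t *\<^sub>R x) ` (cball 0 r \<inter> N)"
  then obtain x where x: "x \<in> cball 0 r" "x \<in> N" "y = t *\<^sub>R x" by auto
  have "norm y = t * norm x" using x assms by simp
  also have "\<dots> \<le> t * r" using x assms by (simp add: mult_left_mono)
  finally show "y \<in> cball 0 (t * r) \<inter> N" using x assms by (simp add: subspace_scale)
next
  fix y assume y: "y \<in> cball 0 (t * r) \<inter> N"
  have "norm ((1 / t) *\<^sub>R y) = norm y / t" using assms by simp
  also have "\<dots> \<le> r" using y assms by (simp add: divide_le_eq mult.commute)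
  finally have "(1 / t) *\<^sub>R y \<in> cball 0 r \<inter> N" using y assms by (simp add: subspace_scale)
  moreover have "y = t *\<^sub>R ((1 / t) *\<^sub>R y)" using assms by simp
  ultimately show "y \<in> (\<lambda>x. t *\<^sub>R x) ` (cball 0 r \<inter> N)" by blast
qed

lemma scale_cball1:
  fixes t :: real
  assumes "t > 0"
  shows "(\<lambda>x. t *\<^sub>R x) ` (cball (0::'a::real_normed_vector) 1) = cball 0 t"
  using scale_cball_subspace[OF assms subspace_UNIV, of 1] by simp

lemma memI: "x = (\<Sum>b\<in>E. of_int (c b) *\<^sub>R b) \<Longrightarrow> x \<in> {\<Sum>b\<in>E. of_int (c b) *\<^sub>R b | c. True}"
  by blast

locale lat =
  fixes L :: "'a::euclidean_space set"
  assumes full: "full_lattice L"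
begin

lemma obtE:
  obtains E where "finite E" "independent E" "card E = DIM('a)"
    "L = {\<Sum>b\<in>E. of_int (c b) *\<^sub>R b | c. True}"
  using full unfolding full_lattice_def lattice_of_rank_def by blast

lemma L_add: "x \<in> L \<Longrightarrow> y \<in> L \<Longrightarrow> x + y \<in> L"
proof -
  assume x: "x \<in> L" and y: "y \<in> L"
  obtain E where E: "L = {\<Sum>b\<in>E. of_int (c b) *\<^sub>R b | c. True}" using obtE by blast
  obtain c where c: "x = (\<Sum>b\<in>E. of_int (c b) *\<^sub>R b)" using x E by blast
  obtain c' where c': "y = (\<Sum>b\<in>E. of_int (c' b) *\<^sub>R b)" using y E by blast
  have "x + y = (\<Sum>b\<in>E. of_int ((\<lambda>b. c b + c' b) b) *\<^sub>R b)"
    unfolding c c' by (simp add: sum.distrib scaleR_add_left)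
  then show ?thesis unfolding E by (rule memI)
qed

lemma L_int: "x \<in> L \<Longrightarrow> of_int k *\<^sub>R x \<in> L"
proof -
  assume x: "x \<in> L"
  obtain E where E: "L = {\<Sum>b\<in>E. of_int (c b) *\<^sub>R b | c. True}" using obtE by blast
  obtain c where c: "x = (\<Sum>b\<in>E. of_int (c b) *\<^sub>R b)" using x E by blast
  have "of_int k *\<^sub>R x = (\<Sum>b\<in>E. of_int ((\<lambda>b. k * c b) b) *\<^sub>R b)"
    unfolding c by (simp add: scaleR_sum_right)
  then show ?thesis unfolding E by (rule memI)
qed

lemma L_zero: "0 \<in> L"
proof -
  obtain E where E: "L = {\<Sum>b\<in>E. of_int (c b) *\<^sub>R b | c. True}" using obtE by blast
  have "0 = (\<Sum>b\<in>E. of_int ((\<lambda>b. 0::int) b) *\<^sub>R b)" by simp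
  then show ?thesis unfolding E by (rule memI)
qed

lemma L_diff: "x \<in> L \<Longrightarrow> y \<in> L \<Longrightarrow> x - y \<in> L"
  using L_add L_int[of y "-1"] by (metis add_uminus_conv_diff of_int_minus of_int_1 scaleR_minus1_left)

lemma L_sum: "finite I \<Longrightarrow> (\<And>i. i \<in> I \<Longrightarrow> x i \<in> L) \<Longrightarrow> (\<Sum>i\<in>I. of_int (m i) *\<^sub>R x i) \<in> L"
proof (induction I rule: finite_induct)
  case empty
  then show ?case using L_zero by simp
next
  case (insert i I)
  then show ?case using L_add L_int by (simp add: sum.insert)
qed

lemma E_sub: "finite E \<Longrightarrow> L = {\<Sum>b\<in>E. of_int (c b) *\<^sub>R b | c. True} \<Longrightarrow> E \<subseteq> L"
proof
  fix b assume E: "finite E" "L = {\<Sum>b\<in>E. of_int (c b) *\<^sub>R b | c. True}" and b: "b \<in> E"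
  have "(\<Sum>b'\<in>E. of_int ((\<lambda>b'. if b' = b then 1 else 0) b') *\<^sub>R b') = (\<Sum>b'\<in>E. if b' = b then b' else 0)"
    by (intro sum.cong) auto
  also have "\<dots> = b" using E b by (simp add: sum.delta)
  finally have "b = (\<Sum>b'\<in>E. of_int ((\<lambda>b'. if b' = b then 1 else 0) b') *\<^sub>R b')" by simp
  then show "b \<in> L" unfolding E(2) by (rule memI)
qed

lemma L_not_span:
  assumes "finite S" "card S < DIM('a)"
  shows "\<exists>w\<in>L. w \<notin> span S"
proof (rule ccontr)
  assume "\<not> ?thesis"
  then have LS: "L \<subseteq> span S" by blast
  obtain E where E: "finite E" "independent E" "card E = DIM('a)"
    "L = {\<Sum>b\<in>E. of_int (c b) *\<^sub>R b | c. True}" using obtE by blast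
  have "E \<subseteq> span S" using E_sub[OF E(1,4)] LS by blast
  then have "card E \<le> dim (span S)" using E(2) by (rule independent_card_le_dim)
  also have "\<dots> \<le> card S" using assms(1) by (intro dim_le_card) auto
  finally show False using E(3) assms(2) by simp
qed

lemma L_finite: "finite (L \<inter> cball 0 R)"
proof -
  obtain E where E: "finite E" "independent E" "card E = DIM('a)"
    "L = {\<Sum>b\<in>E. of_int (c b) *\<^sub>R b | c. True}" using obtE by blast
  have spE: "span E = UNIV"
    using card_ge_dim_independent[of E UNIV] E by auto
  have "\<forall>b\<in>E. \<exists>K. \<forall>x. norm (representation E x b) \<le> norm x * K"
    using bounded_linear.bounded[OF bounded_linear_representation[OF E(2) spE]] by blast
  then obtain Kf where Kf: "\<And>b x. b \<in> E \<Longrightarrow> norm (representation E x b) \<le> norm x * Kf b"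
    by metis
  define K where "K = (\<Sum>b\<in>E. \<bar>Kf b\<bar>)"
  have Kb: "\<bar>representation E x b\<bar> \<le> norm x * K" if "b \<in> E" for x b
  proof -
    have "\<bar>Kf b\<bar> \<le> K" unfolding K_def using member_le_sum[of b E "\<lambda>b. \<bar>Kf b\<bar>"] E(1) that by auto
    then have "norm x * Kf b \<le> norm x * K" by (intro mult_left_mono) auto
    then show ?thesis using Kf[OF that, of x] by simp
  qed
  define M where "M = \<lceil>R * K\<rceil>"
  have "L \<inter> cball 0 R \<subseteq> (\<lambda>c. \<Sum>b\<in>E. of_int (c b) *\<^sub>R b) ` (PiE E (\<lambda>_. {-M..M}))"
  proof
    fix x assume x: "x \<in> L \<inter> cball 0 R"
    then obtain c where c: "x = (\<Sum>b\<in>E. of_int (c b) *\<^sub>R b)" using E(4) by blast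
    have rep: "representation E x b = of_int (c b)" if "b \<in> E" for b
    proof -
      have "x = (\<Sum>b\<in>E. representation E x b *\<^sub>R b)"
        using sum_representation_eq[of E x E] E spE by simp
      then have "(\<Sum>b\<in>E. (representation E x b - of_int (c b)) *\<^sub>R b) = 0"
        using c by (simp add: scaleR_diff_left sum_subtractf)
      then show ?thesis using E(2) that unfolding independent_explicit by auto
    qed
    have bnd: "c b \<in> {-M..M}" if "b \<in> E" for b
    proof -
      have "\<bar>of_int (c b)\<bar> \<le> norm x * K" using Kb[OF that, of x] rep[OF that] by simp
      also have "\<dots> \<le> R * K"
        using x by (intro mult_right_mono) (auto simp: K_def intro: sum_nonneg)
      finally have "\<bar>real_of_int (c b)\<bar> \<le> R * K" .
      then show ?thesis unfolding M_def by (auto simp: abs_le_iff le_ceiling_iff ceiling_le_iff) linarith+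
    qed
    have "restrict c E \<in> PiE E (\<lambda>_. {-M..M})" using bnd by auto
    moreover have "x = (\<Sum>b\<in>E. of_int (restrict c E b) *\<^sub>R b)" using c by simp
    ultimately show "x \<in> (\<lambda>c. \<Sum>b\<in>E. of_int (c b) *\<^sub>R b) ` (PiE E (\<lambda>_. {-M..M}))" by blast
  qed
  moreover have "finite (PiE E (\<lambda>_. {-M..M}))" using E(1) by (simp add: finite_PiE)
  ultimately show ?thesis using finite_subset by blast
qed

lemma shortest:
  assumes "w0 \<in> L" "w0 \<notin> span S"
  shows "\<exists>w\<in>L. w \<notin> span S \<and> (\<forall>u\<in>L. u \<notin> span S \<longrightarrow> norm w \<le> norm u)"
proof -
  define X where "X = {u \<in> L \<inter> cball 0 (norm w0). u \<notin> span S}"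
  have finX: "finite X" unfolding X_def using L_finite[of "norm w0"] by (rule finite_subset[rotated]) auto
  have w0X: "w0 \<in> X" unfolding X_def using assms by auto
  define m where "m = Min (norm ` X)"
  have "m \<in> norm ` X" unfolding m_def using finX w0X by (intro Min_in) auto
  then obtain w where w: "w \<in> X" "norm w = m" by auto
  have mle: "m \<le> norm u" if "u \<in> X" for u unfolding m_def using finX that by simp
  show ?thesis
  proof (intro bexI conjI ballI impI)
    show "w \<in> L" "w \<notin> span S" using w unfolding X_def by auto
    fix u assume u: "u \<in> L" "u \<notin> span S"
    show "norm w \<le> norm u"
    proof (cases "norm u \<le> norm w0")
      case True
      then have "u \<in> X" using u unfolding X_def by auto
      then show ?thesis using mle w by simp
    next
      case False
      then show ?thesis using mle[OF w0X] w by simp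
    qed
  qed
qed

lemma greedy:
  "\<exists>v. \<forall>k<DIM('a). v k \<in> L \<and> v k \<notin> span (v ` {..<k}) \<and>
      (\<forall>w\<in>L. w \<notin> span (v ` {..<k}) \<longrightarrow> norm (v k) \<le> norm w)"
proof -
  have "\<forall>j\<le>DIM('a). \<exists>v. \<forall>k<j. v k \<in> L \<and> v k \<notin> span (v ` {..<k}) \<and>
      (\<forall>w\<in>L. w \<notin> span (v ` {..<k}) \<longrightarrow> norm (v k) \<le> norm w)"
  proof (intro allI impI)
    fix j assume "j \<le> DIM('a)"
    then show "\<exists>v. \<forall>k<j. v k \<in> L \<and> v k \<notin> span (v ` {..<k}) \<and>
      (\<forall>w\<in>L. w \<notin> span (v ` {..<k}) \<longrightarrow> norm (v k) \<le> norm w)"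
    proof (induction j)
      case 0
      then show ?case by simp
    next
      case (Suc j)
      then obtain v where v: "\<forall>k<j. v k \<in> L \<and> v k \<notin> span (v ` {..<k}) \<and>
        (\<forall>w\<in>L. w \<notin> span (v ` {..<k}) \<longrightarrow> norm (v k) \<le> norm w)" by auto
      have "card (v ` {..<j}) \<le> j" using card_image_le[of "{..<j}" v] by simp
      then have "card (v ` {..<j}) < DIM('a)" using Suc.prems by simp
      then obtain w0 where "w0 \<in> L" "w0 \<notin> span (v ` {..<j})" using L_not_span by blast
      then obtain w where w: "w \<in> L" "w \<notin> span (v ` {..<j})"
        "\<forall>u\<in>L. u \<notin> span (v ` {..<j}) \<longrightarrow> norm w \<le> norm u"
        using shortest by blast
      define v' where "v' = v(j := w)"
      have im: "v' ` {..<k} = v ` {..<k}" if "k \<le> j" for k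
        unfolding v'_def using that by (intro image_cong) auto
      show ?case
      proof (intro exI[of _ v'] allI impI)
        fix k assume "k < Suc j"
        then consider "k < j" | "k = j" by linarith
        then show "v' k \<in> L \<and> v' k \<notin> span (v' ` {..<k}) \<and>
          (\<forall>w\<in>L. w \<notin> span (v' ` {..<k}) \<longrightarrow> norm (v' k) \<le> norm w)"
        proof cases
          case 1
          then show ?thesis using v im[of k] unfolding v'_def by auto
        next
          case 2
          then show ?thesis using w im[of j] unfolding v'_def by auto
        qed
      qed
    qed
  qed
  then show ?thesis by blast
qed

end


locale lat_v = lat L for L :: "'a::euclidean_space set" +
  fixes v :: "nat \<Rightarrow> 'a"
  assumes vL: "k < DIM('a) \<Longrightarrow> v k \<in> L"
    and vns: "k < DIM('a) \<Longrightarrow> v k \<notin> span (v ` {..<k})"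
    and vmin: "k < DIM('a) \<Longrightarrow> w \<in> L \<Longrightarrow> w \<notin> span (v ` {..<k}) \<Longrightarrow> norm (v k) \<le> norm w"
begin

lemma v_indep: "indep_seq v DIM('a)"
  using vns by (rule indep_seq_notin_span)

lemma v_pos: "k < DIM('a) \<Longrightarrow> norm (v k) > 0"
  using vns[of k] span_zero by fastforce

lemma v_mono: "k \<le> j \<Longrightarrow> j < DIM('a) \<Longrightarrow> norm (v k) \<le> norm (v j)"
proof -
  assume kj: "k \<le> j" "j < DIM('a)"
  have "span (v ` {..<k}) \<subseteq> span (v ` {..<j})" using kj by (intro span_mono image_mono) auto
  then have "v j \<notin> span (v ` {..<k})" using vns[OF kj(2)] by blast
  then show ?thesis using vmin[of k "v j"] vL[OF kj(2)] kj by simp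
qed

lemma dim_v: "j \<le> DIM('a) \<Longrightarrow> dim (span (v ` {..<j})) = j"
proof -
  assume j: "j \<le> DIM('a)"
  have "independent (v ` {..<j})" "card (v ` {..<j}) = j"
    using indep_seq_independent[OF v_indep, of "{..<j}"] j by auto
  then show ?thesis using dim_span_eq_card_independent[of "v ` {..<j}"] by simp
qed

lemma succ_min_v:
  assumes k: "k < DIM('a)"
  shows "succ_min (Suc k) L (cball 0 1) = norm (v k)"
proof -
  have T: "{t. t > 0 \<and> dim (L \<inter> ((\<lambda>x. t *\<^sub>R x) ` cball 0 1)) \<ge> Suc k} =
        {t. t > 0 \<and> dim (L \<inter> cball 0 t) \<ge> Suc k}"
    by (intro Collect_cong conj_cong refl) (simp add: scale_cball1)
  show ?thesis unfolding succ_min_def T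
  proof (rule cInf_eq_minimum)
    have sub: "v ` {..<Suc k} \<subseteq> L \<inter> cball 0 (norm (v k))"
      using vL v_mono k by auto
    have "independent (v ` {..<Suc k})" "card (v ` {..<Suc k}) = Suc k"
      using indep_seq_independent[OF v_indep, of "{..<Suc k}"] k by auto
    then have "Suc k \<le> dim (L \<inter> cball 0 (norm (v k)))"
      using independent_card_le_dim[OF sub] by simp
    then show "norm (v k) \<in> {t. t > 0 \<and> dim (L \<inter> cball 0 t) \<ge> Suc k}"
      using v_pos[OF k] by simp
  next
    fix t assume "t \<in> {t. t > 0 \<and> dim (L \<inter> cball 0 t) \<ge> Suc k}"
    then have t: "t > 0" "dim (L \<inter> cball 0 t) \<ge> Suc k" by auto
    have "\<not> (L \<inter> cball 0 t \<subseteq> span (v ` {..<k}))"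
    proof
      assume "L \<inter> cball 0 t \<subseteq> span (v ` {..<k})"
      then have "dim (L \<inter> cball 0 t) \<le> dim (span (v ` {..<k}))" by (rule dim_subset)
      then show False using dim_v[of k] k t by simp
    qed
    then obtain w where w0: "w \<in> L \<inter> cball 0 t" "w \<notin> span (v ` {..<k})" by blast
    then have w: "w \<in> L" "norm w \<le> t" "w \<notin> span (v ` {..<k})" by auto
    show "norm (v k) \<le> t" using vmin[OF k w(1,3)] w(2) by simp
  qed
qed

lemma floor_eq_close:
  fixes X Y :: real
  assumes "\<lfloor>X\<rfloor> = \<lfloor>Y\<rfloor>"
  shows "\<bar>X - Y\<bar> < 1"
proof -
  have "of_int \<lfloor>X\<rfloor> \<le> X" "X < of_int \<lfloor>X\<rfloor> + 1" "of_int \<lfloor>Y\<rfloor> \<le> Y" "Y < of_int \<lfloor>Y\<rfloor> + 1"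
    by linarith+
  then show ?thesis using assms by linarith
qed

lemma pigeon:
  assumes j: "j < DIM('a)" and w: "w \<in> L" "w \<notin> span (v ` {..<j})"
    and y: "y \<in> span (v ` {..<j})"
  shows "norm (v j) \<le> 2 * real ((2 * DIM('a)) ^ DIM('a)) * norm (w - y)"
proof -
  define d where "d = DIM('a)"
  define M where "M = 2 * d"
  define K where "K = M ^ j"
  have M1: "M \<ge> 1" "M > 0" unfolding M_def d_def by auto
  obtain \<alpha> where \<alpha>: "y = (\<Sum>k<j. \<alpha> k *\<^sub>R v k)" using y span_lessThan_sum by blast
  define F where "F = (\<lambda>t::nat. restrict (\<lambda>k. nat \<lfloor>real M * frac (real t * \<alpha> k)\<rfloor>) {..<j})"
  have Fin: "F ` {..K} \<subseteq> PiE {..<j} (\<lambda>_. {..<M})"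
  proof
    fix z assume "z \<in> F ` {..K}"
    then obtain t where z: "z = F t" by auto
    have "nat \<lfloor>real M * frac (real t * \<alpha> k)\<rfloor> < M" for k
    proof -
      have "real M * frac (real t * \<alpha> k) < real M" using M1 frac_lt_1 by simp
      moreover have h0: "0 \<le> real M * frac (real t * \<alpha> k)" using frac_ge_0 by simp
      ultimately have "\<lfloor>real M * frac (real t * \<alpha> k)\<rfloor> < int M" by linarith
      moreover have "0 \<le> \<lfloor>real M * frac (real t * \<alpha> k)\<rfloor>" using h0 by simp
      ultimately show ?thesis by (simp add: nat_less_iff)
    qed
    then show "z \<in> PiE {..<j} (\<lambda>_. {..<M})" unfolding z F_def by auto
  qed
  have cardPi: "card (PiE {..<j} (\<lambda>_. {..<M})) = K" unfolding K_def by (simp add: card_PiE)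
  have "\<not> inj_on F {..K}"
  proof
    assume "inj_on F {..K}"
    then have "card {..K} \<le> card (PiE {..<j} (\<lambda>_. {..<M}))"
      using Fin by (intro card_inj_on_le) (auto simp: finite_PiE)
    then show False using cardPi by simp
  qed
  then obtain t1 t2 where t12: "t1 \<le> K" "t2 \<le> K" "t1 \<noteq> t2" "F t1 = F t2"
    unfolding inj_on_def by auto
  define a where "a = min t1 t2"
  define b where "b = max t1 t2"
  have ab: "a < b" "b \<le> K" "F a = F b" using t12 unfolding a_def b_def by (auto simp: min_def max_def)
  define D where "D = b - a"
  have D: "D \<ge> 1" "D \<le> K" "real D = real b - real a" using ab unfolding D_def by auto
  define fd where "fd = (\<lambda>k. frac (real b * \<alpha> k) - frac (real a * \<alpha> k))"
  have fd: "\<bar>fd k\<bar> \<le> 1 / real M" if "k < j" for k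
  proof -
    have "nat \<lfloor>real M * frac (real a * \<alpha> k)\<rfloor> = nat \<lfloor>real M * frac (real b * \<alpha> k)\<rfloor>"
      using fun_cong[OF ab(3), of k] that unfolding F_def by simp
    moreover have "0 \<le> \<lfloor>real M * frac (real a * \<alpha> k)\<rfloor>" "0 \<le> \<lfloor>real M * frac (real b * \<alpha> k)\<rfloor>"
      using frac_ge_0 by simp_all
    ultimately have "\<lfloor>real M * frac (real a * \<alpha> k)\<rfloor> = \<lfloor>real M * frac (real b * \<alpha> k)\<rfloor>" by (metis eq_nat_nat_iff)
    then have "\<bar>real M * frac (real a * \<alpha> k) - real M * frac (real b * \<alpha> k)\<bar> < 1"
      by (rule floor_eq_close)
    then have "real M * \<bar>fd k\<bar> < 1" unfolding fd_def
      by (simp add: abs_minus_commute right_diff_distrib[symmetric] abs_mult)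
    then show ?thesis using M1 by (simp add: field_simps)
  qed
  define u where "u = real D *\<^sub>R w - (\<Sum>k<j. of_int (\<lfloor>real b * \<alpha> k\<rfloor> - \<lfloor>real a * \<alpha> k\<rfloor>) *\<^sub>R v k)"
  have vjL: "\<And>k. k < j \<Longrightarrow> v k \<in> L" using vL j by simp
  have uL: "u \<in> L"
  proof -
    have "real D *\<^sub>R w = of_int (int D) *\<^sub>R w" by simp
    then have "real D *\<^sub>R w \<in> L" using L_int[OF w(1), of "int D"] by metis
    moreover have "(\<Sum>k<j. of_int (\<lfloor>real b * \<alpha> k\<rfloor> - \<lfloor>real a * \<alpha> k\<rfloor>) *\<^sub>R v k) \<in> L"
      using vjL by (intro L_sum) auto
    ultimately show ?thesis unfolding u_def by (rule L_diff)
  qed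
  have sumsp: "(\<Sum>k<j. of_int (\<lfloor>real b * \<alpha> k\<rfloor> - \<lfloor>real a * \<alpha> k\<rfloor>) *\<^sub>R v k) \<in> span (v ` {..<j})"
    by (intro span_sum span_scale span_base) auto
  have uns: "u \<notin> span (v ` {..<j})"
  proof
    assume "u \<in> span (v ` {..<j})"
    then have "real D *\<^sub>R w \<in> span (v ` {..<j})"
      using span_add[OF _ sumsp] unfolding u_def by fastforce
    then have "(1 / real D) *\<^sub>R (real D *\<^sub>R w) \<in> span (v ` {..<j})" by (rule span_scale)
    then show False using w(2) D by simp
  qed
  have ujv: "norm (v j) \<le> norm u" using vmin[OF j uL uns] .
  have ueq: "u = real D *\<^sub>R (w - y) + (\<Sum>k<j. fd k *\<^sub>R v k)"
  proof -
    have "(\<Sum>k<j. fd k *\<^sub>R v k) = (\<Sum>k<j. (real D * \<alpha> k) *\<^sub>R v k - of_int (\<lfloor>real b * \<alpha> k\<rfloor> - \<lfloor>real a * \<alpha> k\<rfloor>) *\<^sub>R v k)"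
    proof (intro sum.cong refl)
      fix k
      have "fd k = real D * \<alpha> k - of_int (\<lfloor>real b * \<alpha> k\<rfloor> - \<lfloor>real a * \<alpha> k\<rfloor>)"
        unfolding fd_def frac_def D(3) by (simp add: algebra_simps)
      then show "fd k *\<^sub>R v k = (real D * \<alpha> k) *\<^sub>R v k - of_int (\<lfloor>real b * \<alpha> k\<rfloor> - \<lfloor>real a * \<alpha> k\<rfloor>) *\<^sub>R v k"
        by (simp add: scaleR_diff_left)
    qed
    also have "\<dots> = real D *\<^sub>R y - (\<Sum>k<j. of_int (\<lfloor>real b * \<alpha> k\<rfloor> - \<lfloor>real a * \<alpha> k\<rfloor>) *\<^sub>R v k)"
      unfolding \<alpha> by (simp add: sum_subtractf scaleR_sum_right)
    finally show ?thesis unfolding u_def by (simp add: algebra_simps)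
  qed
  have "norm u \<le> norm (real D *\<^sub>R (w - y)) + norm (\<Sum>k<j. fd k *\<^sub>R v k)"
    unfolding ueq by (rule norm_triangle_ineq)
  also have "norm (real D *\<^sub>R (w - y)) \<le> real K * norm (w - y)"
    using D by (simp add: mult_right_mono)
  also have "norm (\<Sum>k<j. fd k *\<^sub>R v k) \<le> (\<Sum>k<j. (1 / real M) * norm (v j))"
  proof -
    have "norm (\<Sum>k<j. fd k *\<^sub>R v k) \<le> (\<Sum>k<j. norm (fd k *\<^sub>R v k))" by (rule norm_sum)
    also have "\<dots> \<le> (\<Sum>k<j. (1 / real M) * norm (v j))"
    proof (intro sum_mono)
      fix k assume "k \<in> {..<j}"
      then have "\<bar>fd k\<bar> \<le> 1 / real M" "norm (v k) \<le> norm (v j)" using fd v_mono[of k j] j by auto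
      then have "\<bar>fd k\<bar> * norm (v k) \<le> (1 / real M) * norm (v j)"
        by (intro mult_mono) auto
      then show "norm (fd k *\<^sub>R v k) \<le> (1 / real M) * norm (v j)" by simp
    qed
    finally show ?thesis .
  qed
  also have "(\<Sum>k<j. (1 / real M) * norm (v j)) = real j / real M * norm (v j)" by simp
  also have "real j / real M \<le> 1 / 2" using j M1 unfolding M_def d_def by (simp add: field_simps)
  finally have "norm u \<le> real K * norm (w - y) + 1 / 2 * norm (v j)"
    using v_pos[OF j] by (smt (verit) mult_right_mono norm_ge_zero)
  with ujv have "norm (v j) \<le> 2 * real K * norm (w - y)" by simp
  also have "real K \<le> real ((2 * DIM('a)) ^ DIM('a))"
  proof -
    have "(2 * DIM('a)) ^ j \<le> (2 * DIM('a)) ^ DIM('a)" using j by (intro power_increasing) auto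
    then show ?thesis unfolding K_def M_def d_def by (simp only: of_nat_le_iff)
  qed
  finally show ?thesis by (simp add: mult_right_mono)
qed



end


context lat_v begin

lemma v_span_UNIV: "span (v ` {..<DIM('a)}) = UNIV"
proof (rule subspace_dim_equal)
  show "subspace (span (v ` {..<DIM('a)}))" by (rule subspace_span)
  show "subspace (UNIV :: 'a set)" by (rule subspace_UNIV)
  show "span (v ` {..<DIM('a)}) \<subseteq> UNIV" by simp
  show "dim (UNIV :: 'a set) \<le> dim (span (v ` {..<DIM('a)}))" using dim_v[of "DIM('a)"] by simp
qed

definition Sc :: "nat \<Rightarrow> (nat \<Rightarrow> real) set" where
  "Sc j = {c. (\<forall>k>j. c k = 0) \<and> (\<forall>k<j. 0 \<le> c k \<and> c k < 1) \<and> 0 < c j \<and> c j \<le> 1 \<and>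
              (\<Sum>k<Suc j. c k *\<^sub>R v k) \<in> L}"

lemma Sc_finite:
  assumes j: "j < DIM('a)"
  shows "finite (Sc j)"
proof -
  let ?f = "\<lambda>c. (\<Sum>k<Suc j. c k *\<^sub>R v k)"
  have inj: "inj_on ?f (Sc j)"
  proof (rule inj_onI)
    fix c c' assume c: "c \<in> Sc j" "c' \<in> Sc j" "?f c = ?f c'"
    have eq0: "(\<Sum>k<Suc j. (c k - c' k) *\<^sub>R v k) = 0"
      using c(3) by (simp add: scaleR_diff_left sum_subtractf)
    have sub: "{..<Suc j} \<subseteq> {..<DIM('a)}" using j by auto
    have d0: "\<And>k. k \<in> {..<Suc j} \<Longrightarrow> c k - c' k = 0"
      by (rule indep_seq_gen[OF v_indep sub eq0])
    have gt: "\<And>k. k > j \<Longrightarrow> c k = c' k" using c(1,2) unfolding Sc_def by auto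
    show "c = c'"
    proof (rule ext)
      fix k
      show "c k = c' k"
      proof (cases "k \<le> j")
        case True
        then show ?thesis using d0[of k] by simp
      next
        case False
        then show ?thesis using gt[of k] by simp
      qed
    qed
  qed
  have "?f ` Sc j \<subseteq> L \<inter> cball 0 (\<Sum>k<Suc j. norm (v k))"
  proof
    fix x assume "x \<in> ?f ` Sc j"
    then obtain c where c: "c \<in> Sc j" "x = ?f c" by auto
    have cb: "\<forall>k<j. 0 \<le> c k \<and> c k < 1" "0 < c j" "c j \<le> 1" "?f c \<in> L"
      using c(1) unfolding Sc_def by simp_all
    have "norm x \<le> (\<Sum>k<Suc j. norm (c k *\<^sub>R v k))" unfolding c(2) by (rule norm_sum)
    also have "\<dots> \<le> (\<Sum>k<Suc j. norm (v k))"
    proof (intro sum_mono)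
      fix k assume "k \<in> {..<Suc j}"
      then consider "k = j" | "k < j" by fastforce
      then have "\<bar>c k\<bar> \<le> 1"
      proof cases
        case 1
        then show ?thesis using cb(2,3) by simp
      next
        case 2
        then have "0 \<le> c k \<and> c k < 1" using cb(1) by blast
        then show ?thesis by simp
      qed
      then show "norm (c k *\<^sub>R v k) \<le> norm (v k)" by (simp add: mult_left_le_one_le)
    qed
    finally have "norm x \<le> (\<Sum>k<Suc j. norm (v k))" .
    then show "x \<in> L \<inter> cball 0 (\<Sum>k<Suc j. norm (v k))" using cb(4) c(2) by simp
  qed
  then have "finite (?f ` Sc j)" by (rule finite_subset) (rule L_finite)
  then show ?thesis using inj by (rule finite_imageD)
qed

lemma ind_in_Sc:
  assumes j: "j < DIM('a)"
  shows "(\<lambda>k. if k = j then 1 else 0) \<in> Sc j"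
proof -
  have "(\<Sum>k<Suc j. (if k = j then 1 else 0) *\<^sub>R v k) = (\<Sum>k<Suc j. if k = j then v k else 0)"
    by (intro sum.cong) auto
  also have "\<dots> = v j" by (simp add: sum.delta)
  finally show ?thesis unfolding Sc_def using vL[OF j] by auto
qed

lemma exists_min:
  assumes j: "j < DIM('a)"
  shows "\<exists>c\<in>Sc j. \<forall>c'\<in>Sc j. c j \<le> c' j"
proof -
  define m where "m = Min ((\<lambda>c. c j) ` Sc j)"
  have "m \<in> (\<lambda>c. c j) ` Sc j" unfolding m_def using Sc_finite[OF j] ind_in_Sc[OF j] by (intro Min_in) auto
  then obtain c where c: "c \<in> Sc j" "c j = m" by auto
  have "m \<le> c' j" if "c' \<in> Sc j" for c' unfolding m_def using Sc_finite[OF j] that by simp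
  then show ?thesis using c by auto
qed

definition C :: "nat \<Rightarrow> nat \<Rightarrow> real" where
  "C = (SOME C. \<forall>j<DIM('a). C j \<in> Sc j \<and> (\<forall>c'\<in>Sc j. C j j \<le> c' j))"

lemma C_prop:
  assumes "j < DIM('a)"
  shows "C j \<in> Sc j" "\<And>c'. c' \<in> Sc j \<Longrightarrow> C j j \<le> c' j"
proof -
  have "\<forall>j. \<exists>c. j < DIM('a) \<longrightarrow> c \<in> Sc j \<and> (\<forall>c'\<in>Sc j. c j \<le> c' j)"
    using exists_min by blast
  then have "\<exists>C. \<forall>j. j < DIM('a) \<longrightarrow> C j \<in> Sc j \<and> (\<forall>c'\<in>Sc j. C j j \<le> c' j)"
    by (rule choice)
  then have "\<forall>j<DIM('a). C j \<in> Sc j \<and> (\<forall>c'\<in>Sc j. C j j \<le> c' j)"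
    unfolding C_def by (rule someI_ex[where P = "\<lambda>C. \<forall>j<DIM('a). C j \<in> Sc j \<and> (\<forall>c'\<in>Sc j. C j j \<le> c' j)"])
  then show "C j \<in> Sc j" "\<And>c'. c' \<in> Sc j \<Longrightarrow> C j j \<le> c' j" using assms by auto
qed

definition a :: "nat \<Rightarrow> 'a" where
  "a j = (\<Sum>k<Suc j. C j k *\<^sub>R v k)"

lemma C_bounds:
  assumes "j < DIM('a)"
  shows "0 < C j j" "C j j \<le> 1" "\<And>k. k < j \<Longrightarrow> 0 \<le> C j k \<and> C j k < 1" "\<And>k. k > j \<Longrightarrow> C j k = 0"
    "a j \<in> L"
  using C_prop(1)[OF assms] unfolding Sc_def a_def by auto

lemma a_ns:
  assumes j: "j < DIM('a)"
  shows "a j \<notin> span (v ` {..<j})"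
proof
  assume "a j \<in> span (v ` {..<j})"
  then obtain \<beta> where \<beta>: "a j = (\<Sum>k<j. \<beta> k *\<^sub>R v k)" using span_lessThan_sum by blast
  define \<beta>' where "\<beta>' = (\<lambda>k. if k < j then \<beta> k else 0)"
  have "(\<Sum>k<Suc j. \<beta>' k *\<^sub>R v k) = (\<Sum>k<j. \<beta> k *\<^sub>R v k)"
    unfolding \<beta>'_def by (simp add: lessThan_Suc)
  then have "(\<Sum>k<Suc j. (C j k - \<beta>' k) *\<^sub>R v k) = 0"
    using \<beta> unfolding a_def by (simp add: scaleR_diff_left sum_subtractf)
  moreover have "{..<Suc j} \<subseteq> {..<DIM('a)}" using j by auto
  ultimately have "C j j - \<beta>' j = 0"
    using indep_seq_gen[OF v_indep, of "{..<Suc j}" "\<lambda>k. C j k - \<beta>' k" j] by blast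
  then show False using C_bounds(1)[OF j] unfolding \<beta>'_def by simp
qed

lemma a_norm:
  assumes j: "j < DIM('a)"
  shows "norm (a j) \<le> real DIM('a) * norm (v j)"
proof -
  have "norm (a j) \<le> (\<Sum>k<Suc j. norm (C j k *\<^sub>R v k))" unfolding a_def by (rule norm_sum)
  also have "\<dots> \<le> (\<Sum>k<Suc j. norm (v j))"
  proof (intro sum_mono)
    fix k assume k: "k \<in> {..<Suc j}"
    then consider "k = j" | "k < j" by fastforce
    then have "\<bar>C j k\<bar> \<le> 1"
    proof cases
      case 1
      then show ?thesis using C_bounds(1,2)[OF j] by simp
    next
      case 2
      then show ?thesis using C_bounds(3)[OF j 2] by simp
    qed
    moreover have "norm (v k) \<le> norm (v j)" using k j v_mono by auto
    ultimately have "\<bar>C j k\<bar> * norm (v k) \<le> 1 * norm (v j)" by (intro mult_mono) auto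
    then show "norm (C j k *\<^sub>R v k) \<le> norm (v j)" by simp
  qed
  also have "\<dots> = real (Suc j) * norm (v j)" by simp
  also have "\<dots> \<le> real DIM('a) * norm (v j)" using j by (intro mult_right_mono) auto
  finally show ?thesis .
qed

lemma a_span_sub:
  assumes "j \<le> DIM('a)"
  shows "span (a ` {..<j}) \<subseteq> span (v ` {..<j})"
proof (rule span_minimal)
  show "subspace (span (v ` {..<j}))" by (rule subspace_span)
  show "a ` {..<j} \<subseteq> span (v ` {..<j})"
  proof
    fix x assume "x \<in> a ` {..<j}"
    then obtain i where i: "i < j" "x = a i" by auto
    have "(\<Sum>k<Suc i. C i k *\<^sub>R v k) \<in> span (v ` {..<j})"
      using i by (intro span_sum span_scale span_base) auto
    then show "x \<in> span (v ` {..<j})" unfolding i a_def .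
  qed
qed

definition Bc :: real where "Bc = 2 * real ((2 * DIM('a)) ^ DIM('a))"

lemma Bc_pos: "Bc > 0" unfolding Bc_def by simp

lemma pigeon_a:
  assumes j: "j < DIM('a)" and y: "y \<in> span (a ` {..<j})"
  shows "norm (v j) \<le> Bc * norm (a j - y)"
  unfolding Bc_def
  using pigeon[OF j C_bounds(5)[OF j] a_ns[OF j]] a_span_sub[of j] y j by auto

lemma cond_step:
  assumes n: "n < DIM('a)"
  shows "\<bar>m n\<bar> * norm (v n) \<le> Bc * norm (\<Sum>i<Suc n. m i *\<^sub>R a i)"
proof (cases "m n = 0")
  case True
  then show ?thesis using Bc_pos by simp
next
  case False
  define y where "y = - (1 / m n) *\<^sub>R (\<Sum>i<n. m i *\<^sub>R a i)"
  have ysp: "y \<in> span (a ` {..<n})"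
    unfolding y_def by (intro span_scale span_sum span_base) auto
  have my: "m n *\<^sub>R y = - (\<Sum>i<n. m i *\<^sub>R a i)" unfolding y_def using False by simp
  have "(\<Sum>i<Suc n. m i *\<^sub>R a i) = (\<Sum>i<n. m i *\<^sub>R a i) + m n *\<^sub>R a n" by simp
  also have "\<dots> = m n *\<^sub>R (a n - y)" unfolding scaleR_diff_right my by simp
  finally have "(\<Sum>i<Suc n. m i *\<^sub>R a i) = m n *\<^sub>R (a n - y)" .
  then have eq: "norm (\<Sum>i<Suc n. m i *\<^sub>R a i) = \<bar>m n\<bar> * norm (a n - y)" by simp
  have "\<bar>m n\<bar> * norm (v n) \<le> \<bar>m n\<bar> * (Bc * norm (a n - y))"
    using pigeon_a[OF n ysp] by (intro mult_left_mono) auto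
  then show ?thesis unfolding eq by (simp add: algebra_simps)
qed

definition Cg :: real where "Cg = Bc * (1 + real DIM('a) * Bc) ^ DIM('a)"

lemma cond_all:
  assumes j: "j < DIM('a)"
  shows "\<bar>m j\<bar> * norm (v j) \<le> Cg * norm (\<Sum>i<DIM('a). m i *\<^sub>R a i)"
proof -
  define X where "X = (\<lambda>n. \<Sum>i<n. m i *\<^sub>R a i)"
  define R where "R = 1 + real DIM('a) * Bc"
  have R1: "R \<ge> 1" unfolding R_def using Bc_pos by simp
  have bound: "\<forall>n. n + q = DIM('a) \<longrightarrow> norm (X n) \<le> R ^ q * norm (X DIM('a))" for q
  proof (induction q)
    case 0
    then show ?case by simp
  next
    case (Suc q)
    show ?case
    proof (intro allI impI)
      fix n assume nq: "n + Suc q = DIM('a)"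
      then have n: "n < DIM('a)" by simp
      have "X n = X (Suc n) - m n *\<^sub>R a n" unfolding X_def by simp
      then have "norm (X n) \<le> norm (X (Suc n)) + norm (m n *\<^sub>R a n)"
        using norm_triangle_ineq4[of "X (Suc n)" "m n *\<^sub>R a n"] by simp
      also have "norm (m n *\<^sub>R a n) \<le> \<bar>m n\<bar> * (real DIM('a) * norm (v n))"
        using a_norm[OF n] by (simp add: mult_left_mono)
      also have "\<dots> = real DIM('a) * (\<bar>m n\<bar> * norm (v n))" by simp
      also have "\<dots> \<le> real DIM('a) * (Bc * norm (X (Suc n)))"
        using cond_step[OF n, of m] unfolding X_def by (intro mult_left_mono) auto
      finally have "norm (X n) \<le> R * norm (X (Suc n))" unfolding R_def by (simp add: algebra_simps)
      also have "norm (X (Suc n)) \<le> R ^ q * norm (X DIM('a))" using Suc.IH nq by simp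
      finally show "norm (X n) \<le> R ^ Suc q * norm (X DIM('a))"
        using R1 by (simp add: mult_left_mono)
    qed
  qed
  have "\<bar>m j\<bar> * norm (v j) \<le> Bc * norm (X (Suc j))" using cond_step[OF j, of m] unfolding X_def .
  also have "norm (X (Suc j)) \<le> R ^ (DIM('a) - Suc j) * norm (X DIM('a))"
    using bound[of "DIM('a) - Suc j"] j by simp
  also have "R ^ (DIM('a) - Suc j) \<le> R ^ DIM('a)" using R1 by (intro power_increasing) auto
  finally have "\<bar>m j\<bar> * norm (v j) \<le> Bc * (R ^ DIM('a) * norm (X DIM('a)))"
    using Bc_pos by (simp add: mult_left_mono mult_right_mono)
  then show ?thesis unfolding Cg_def R_def X_def by (simp add: algebra_simps)
qed

lemma a_indep: "indep_seq a DIM('a)"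
  unfolding indep_seq_def
proof (intro allI impI)
  fix m k assume m: "(\<Sum>k<DIM('a). m k *\<^sub>R a k) = 0" and k: "k < DIM('a)"
  have "\<bar>m k\<bar> * norm (v k) \<le> 0" using cond_all[OF k, of m] m by simp
  then show "m k = 0" using v_pos[OF k] by (simp add: mult_le_0_iff)
qed

lemma a_span_eq:
  assumes "j \<le> DIM('a)"
  shows "span (a ` {..<j}) = span (v ` {..<j})"
proof (rule subspace_dim_equal)
  show "subspace (span (a ` {..<j}))" "subspace (span (v ` {..<j}))" by (rule subspace_span)+
  show "span (a ` {..<j}) \<subseteq> span (v ` {..<j})" using a_span_sub[OF assms] .
  have "independent (a ` {..<j})" "card (a ` {..<j}) = j"
    using indep_seq_independent[OF a_indep, of "{..<j}"] assms by auto
  then have "dim (span (a ` {..<j})) = j" using dim_span_eq_card_independent[of "a ` {..<j}"] by simp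
  then show "dim (span (v ` {..<j})) \<le> dim (span (a ` {..<j}))" using dim_v[OF assms] by simp
qed

lemma a_span_UNIV: "span (a ` {..<DIM('a)}) = UNIV"
  using a_span_eq[of "DIM('a)"] v_span_UNIV by simp

lemma a_int_rep_aux:
  "j \<le> DIM('a) \<Longrightarrow> w \<in> L \<Longrightarrow> w \<in> span (v ` {..<j}) \<Longrightarrow> \<exists>m::nat \<Rightarrow> int. w = (\<Sum>i<j. of_int (m i) *\<^sub>R a i)"
proof (induction j arbitrary: w)
  case 0
  then show ?case by simp
next
  case (Suc j)
  have j: "j < DIM('a)" using Suc.prems by simp
  obtain \<beta> where \<beta>: "w = (\<Sum>k<Suc j. \<beta> k *\<^sub>R v k)" using Suc.prems(3) span_lessThan_sum by blast
  define g where "g = C j j"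
  have g: "0 < g" "g \<le> 1" using C_bounds[OF j] unfolding g_def by auto
  define q where "q = \<lfloor>\<beta> j / g\<rfloor>"
  define \<gamma> where "\<gamma> = (\<lambda>k. \<beta> k - of_int q * C j k)"
  define w' where "w' = w - of_int q *\<^sub>R a j"
  have w'L: "w' \<in> L" unfolding w'_def using Suc.prems(2) C_bounds(5)[OF j] by (intro L_diff L_int)
  have w'eq: "w' = (\<Sum>k<Suc j. \<gamma> k *\<^sub>R v k)"
    unfolding w'_def \<beta> a_def \<gamma>_def by (simp add: scaleR_diff_left sum_subtractf scaleR_sum_right scaleR_add_right)
  have gj: "0 \<le> \<gamma> j" "\<gamma> j < g"
  proof -
    have "of_int q \<le> \<beta> j / g" "\<beta> j / g < of_int q + 1" unfolding q_def by linarith+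
    then have "of_int q * g \<le> \<beta> j" "\<beta> j < (of_int q + 1) * g" using g by (simp_all add: field_simps)
    then show "0 \<le> \<gamma> j" "\<gamma> j < g" unfolding \<gamma>_def g_def by (simp_all add: algebra_simps)
  qed
  have g0: "\<gamma> j = 0"
  proof (rule ccontr)
    assume "\<gamma> j \<noteq> 0"
    then have gp: "\<gamma> j > 0" using gj by simp
    define c where "c = (\<lambda>k. if k < j then frac (\<gamma> k) else if k = j then \<gamma> j else 0)"
    have "(\<Sum>k<Suc j. c k *\<^sub>R v k) = (\<Sum>k<j. frac (\<gamma> k) *\<^sub>R v k) + \<gamma> j *\<^sub>R v j"
      unfolding c_def by simp
    also have "(\<Sum>k<j. frac (\<gamma> k) *\<^sub>R v k) = (\<Sum>k<j. \<gamma> k *\<^sub>R v k) - (\<Sum>k<j. of_int \<lfloor>\<gamma> k\<rfloor> *\<^sub>R v k)"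
      unfolding frac_def by (simp add: scaleR_diff_left sum_subtractf)
    finally have "(\<Sum>k<Suc j. c k *\<^sub>R v k) = w' - (\<Sum>k<j. of_int \<lfloor>\<gamma> k\<rfloor> *\<^sub>R v k)"
      unfolding w'eq by simp
    moreover have "(\<Sum>k<j. of_int \<lfloor>\<gamma> k\<rfloor> *\<^sub>R v k) \<in> L" using vL j by (intro L_sum) auto
    ultimately have "(\<Sum>k<Suc j. c k *\<^sub>R v k) \<in> L" using w'L L_diff by simp
    moreover have "\<forall>k<j. 0 \<le> c k \<and> c k < 1" unfolding c_def by (auto simp: frac_lt_1)
    ultimately have "c \<in> Sc j" unfolding Sc_def c_def using gp gj g by auto
    then have "C j j \<le> c j" by (rule C_prop(2)[OF j])
    then show False using gj unfolding c_def g_def by simp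
  qed
  have "w' = (\<Sum>k<j. \<gamma> k *\<^sub>R v k)" using w'eq g0 by simp
  then have "w' \<in> span (v ` {..<j})" using span_lessThan_sum by blast
  then obtain m where m: "w' = (\<Sum>i<j. of_int (m i) *\<^sub>R a i)" using Suc.IH[OF _ w'L] j by auto
  have "w = w' + of_int q *\<^sub>R a j" unfolding w'_def by simp
  also have "\<dots> = (\<Sum>i<Suc j. of_int ((m(j := q)) i) *\<^sub>R a i)"
    unfolding m by simp
  finally show ?case by blast
qed

lemma a_int_rep:
  assumes "w \<in> L"
  shows "\<exists>m::nat \<Rightarrow> int. w = (\<Sum>i<DIM('a). of_int (m i) *\<^sub>R a i)"
  using a_int_rep_aux[of "DIM('a)" w] assms v_span_UNIV by simp

end




lemma sum_split_at:
  fixes s n :: nat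
  assumes "s \<le> n"
  shows "(\<Sum>i<n. f i) = (\<Sum>i<s. f i) + (\<Sum>i\<in>{s..<n}. f i)"
proof -
  have "{..<n} = {..<s} \<union> {s..<n}" using assms by auto
  moreover have "{..<s} \<inter> {s..<n} = {}" by auto
  ultimately show ?thesis by (simp add: sum.union_disjoint)
qed

context lat_v begin

lemma sum_restrict_d:
  assumes "I \<subseteq> {..<DIM('a)}"
  shows "(\<Sum>i<DIM('a). (if i \<in> I then \<alpha> i else 0) *\<^sub>R a i) = (\<Sum>i\<in>I. \<alpha> i *\<^sub>R a i)"
proof -
  have "(\<Sum>i<DIM('a). (if i \<in> I then \<alpha> i else 0) *\<^sub>R a i) = (\<Sum>i<DIM('a). if i \<in> I then \<alpha> i *\<^sub>R a i else 0)"
    by (intro sum.cong) auto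
  also have "\<dots> = (\<Sum>i\<in>{..<DIM('a)} \<inter> I. \<alpha> i *\<^sub>R a i)"
    by (rule sum.inter_restrict[symmetric]) simp
  also have "{..<DIM('a)} \<inter> I = I" using assms by auto
  finally show ?thesis .
qed

lemma coef_zero:
  assumes I: "I \<subseteq> {..<DIM('a)}" and J: "J \<subseteq> {..<DIM('a)}"
    and eq: "(\<Sum>i\<in>I. \<alpha> i *\<^sub>R a i) = (\<Sum>i\<in>J. \<beta> i *\<^sub>R a i)"
    and k: "k \<in> I" "k \<notin> J"
  shows "\<alpha> k = 0"
proof -
  define \<gamma> where "\<gamma> = (\<lambda>i. (if i \<in> I then \<alpha> i else 0) - (if i \<in> J then \<beta> i else 0))"
  have "(\<Sum>i<DIM('a). \<gamma> i *\<^sub>R a i) =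
      (\<Sum>i<DIM('a). (if i \<in> I then \<alpha> i else 0) *\<^sub>R a i) - (\<Sum>i<DIM('a). (if i \<in> J then \<beta> i else 0) *\<^sub>R a i)"
    unfolding \<gamma>_def by (simp add: scaleR_diff_left sum_subtractf)
  also have "\<dots> = 0" unfolding sum_restrict_d[OF I] sum_restrict_d[OF J] eq by simp
  finally have "(\<Sum>i<DIM('a). \<gamma> i *\<^sub>R a i) = 0" .
  moreover have "k < DIM('a)" using I k by auto
  ultimately have "\<gamma> k = 0" by (rule indep_seqD[OF a_indep])
  then show ?thesis unfolding \<gamma>_def using k by simp
qed

lemma a_coeffs: "\<exists>m. x = (\<Sum>i<DIM('a). m i *\<^sub>R a i)"
  using a_span_UNIV span_lessThan_sum[of x a "DIM('a)"] by simp

lemma main: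
  assumes s: "s < DIM('a)" and r: "real DIM('a) * real DIM('a) * Cg \<le> real r" "r > 0"
  shows "\<exists>(b :: nat \<Rightarrow> 'a) N.
         (\<forall>j<s. b j \<in> L) \<and>
         subspace N \<and> dim N = DIM('a) - s \<and>
         span (b ` {..<s}) \<inter> N = {0} \<and>
         {x + y | x y. x \<in> span (b ` {..<s}) \<and> y \<in> N} = UNIV \<and>
         lattice_in N (L \<inter> N) \<and>
         proj_along N (b ` {..<s}) ` (L \<inter> cball 0 1) \<subseteq> L \<inter> N \<inter> cball 0 (real r) \<and>
         (\<forall>i\<in>{1..DIM('a) - s}.
            1 / real r * succ_min (i + s) L (cball 0 1) \<le> succ_min i (L \<inter> N) (cball 0 (real r) \<inter> N) \<and>
            succ_min i (L \<inter> N) (cball 0 (real r) \<inter> N) \<le> real DIM('a) / real r * succ_min (i + s) L (cball 0 1))"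
proof -
  define d where "d = DIM('a)"
  define I where "I = {s..<d}"
  define N where "N = span (a ` I)"
  have Id: "I \<subseteq> {..<d}" unfolding I_def by auto
  have sd: "{..<s} \<subseteq> {..<d}" using s unfolding d_def by auto
  have aL: "\<And>i. i < d \<Longrightarrow> a i \<in> L" using C_bounds(5) unfolding d_def by simp
  have subN: "subspace N" unfolding N_def by (rule subspace_span)
  have indI: "independent (a ` I)" "card (a ` I) = d - s"
    using indep_seq_independent[OF a_indep, of I] Id unfolding I_def d_def by auto
  have dimN: "dim N = d - s" unfolding N_def using dim_span_eq_card_independent[OF indI(1)] indI(2) by simp
  have inN: "(\<Sum>i\<in>I. \<beta> i *\<^sub>R a i) \<in> N" for \<beta>
    unfolding N_def by (intro span_sum span_scale span_base) auto
  have inS: "(\<Sum>i<s. \<beta> i *\<^sub>R a i) \<in> span (a ` {..<s})" for \<beta>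
    by (intro span_sum span_scale span_base) auto
  have Nrep: "x \<in> N \<Longrightarrow> \<exists>\<beta>. x = (\<Sum>i\<in>I. \<beta> i *\<^sub>R a i)" for x
    unfolding N_def using span_image_sum[of I a] unfolding I_def by auto
  have inter0: "span (a ` {..<s}) \<inter> N = {0}"
  proof (intro set_eqI iffI)
    fix x assume "x \<in> span (a ` {..<s}) \<inter> N"
    then obtain \<alpha> \<beta> where \<alpha>: "x = (\<Sum>i<s. \<alpha> i *\<^sub>R a i)" and \<beta>: "x = (\<Sum>i\<in>I. \<beta> i *\<^sub>R a i)"
      using Nrep span_lessThan_sum by blast
    have "\<alpha> k = 0" if "k < s" for k
      using coef_zero[OF sd[unfolded d_def] Id[unfolded d_def], of \<alpha> \<beta> k] \<alpha> \<beta> that unfolding I_def by auto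
    then show "x \<in> {0}" using \<alpha> by simp
  next
    fix x :: 'a assume "x \<in> {0}"
    then show "x \<in> span (a ` {..<s}) \<inter> N" using subN by (simp add: span_zero subspace_0)
  qed
  have decomp: "x = (\<Sum>i<s. m i *\<^sub>R a i) + (\<Sum>i\<in>I. m i *\<^sub>R a i)" if "x = (\<Sum>i<d. m i *\<^sub>R a i)" for x m
    using that sum_split_at[of s d "\<lambda>i. m i *\<^sub>R a i"] s unfolding I_def d_def by simp
  have sumU: "{x + y | x y. x \<in> span (a ` {..<s}) \<and> y \<in> N} = UNIV"
  proof (intro set_eqI iffI)
    fix z :: 'a
    obtain m where "z = (\<Sum>i<d. m i *\<^sub>R a i)" using a_coeffs unfolding d_def by blast
    then have "z = (\<Sum>i<s. m i *\<^sub>R a i) + (\<Sum>i\<in>I. m i *\<^sub>R a i)" by (rule decomp)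
    then show "z \<in> {x + y | x y. x \<in> span (a ` {..<s}) \<and> y \<in> N}" using inS inN by blast
  qed simp
  have proj: "proj_along N (a ` {..<s}) x = (\<Sum>i\<in>I. m i *\<^sub>R a i)" if x: "x = (\<Sum>i<d. m i *\<^sub>R a i)" for x m
    unfolding proj_along_def
  proof (rule the_equality)
    show "(\<Sum>i\<in>I. m i *\<^sub>R a i) \<in> N \<and> x - (\<Sum>i\<in>I. m i *\<^sub>R a i) \<in> span (a ` {..<s})"
      using inN inS decomp[OF x] by simp
    fix y assume y: "y \<in> N \<and> x - y \<in> span (a ` {..<s})"
    have "(\<Sum>i\<in>I. m i *\<^sub>R a i) - y = (x - y) - (x - (\<Sum>i\<in>I. m i *\<^sub>R a i))" by simp
    moreover have "x - (\<Sum>i\<in>I. m i *\<^sub>R a i) \<in> span (a ` {..<s})" using inS decomp[OF x] by simp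
    ultimately have "(\<Sum>i\<in>I. m i *\<^sub>R a i) - y \<in> span (a ` {..<s})" using y span_diff by metis
    moreover have "(\<Sum>i\<in>I. m i *\<^sub>R a i) - y \<in> N" using y inN subN by (simp add: subspace_diff)
    ultimately have "(\<Sum>i\<in>I. m i *\<^sub>R a i) - y = 0" using inter0 by blast
    then show "y = (\<Sum>i\<in>I. m i *\<^sub>R a i)" by simp
  qed
  have projsub: "proj_along N (a ` {..<s}) ` (L \<inter> cball 0 1) \<subseteq> L \<inter> N \<inter> cball 0 (real r)"
  proof
    fix z assume "z \<in> proj_along N (a ` {..<s}) ` (L \<inter> cball 0 1)"
    then obtain x where x: "x \<in> L" "norm x \<le> 1" "z = proj_along N (a ` {..<s}) x" by auto
    obtain m :: "nat \<Rightarrow> int" where m: "x = (\<Sum>i<d. of_int (m i) *\<^sub>R a i)"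
      using a_int_rep[OF x(1)] unfolding d_def by blast
    have z: "z = (\<Sum>i\<in>I. of_int (m i) *\<^sub>R a i)" using proj[OF m] x(3) by simp
    have "z \<in> L" unfolding z using aL Id by (intro L_sum) (auto simp: I_def)
    moreover have "z \<in> N" unfolding z by (rule inN)
    moreover have "norm z \<le> real r"
    proof -
      have "norm z \<le> (\<Sum>i\<in>I. norm (of_int (m i) *\<^sub>R a i))" unfolding z by (rule norm_sum)
      also have "\<dots> \<le> (\<Sum>i\<in>I. real d * Cg)"
      proof (intro sum_mono)
        fix i assume i: "i \<in> I"
        then have id: "i < d" using Id by auto
        have "\<bar>of_int (m i)\<bar> * norm (v i) \<le> Cg * norm (\<Sum>i<DIM('a). of_int (m i) *\<^sub>R a i)"
          using cond_all[of i "\<lambda>i. of_int (m i)"] id unfolding d_def by simp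
        also have "\<dots> \<le> Cg" using x(2) m unfolding d_def Cg_def using Bc_pos
          by (simp add: mult_left_le)
        finally have mi: "\<bar>of_int (m i)\<bar> * norm (v i) \<le> Cg" .
        have "norm (of_int (m i) *\<^sub>R a i) = \<bar>of_int (m i)\<bar> * norm (a i)" by simp
        also have "\<dots> \<le> \<bar>of_int (m i)\<bar> * (real d * norm (v i))"
          using a_norm id unfolding d_def by (intro mult_left_mono) auto
        also have "\<dots> = real d * (\<bar>of_int (m i)\<bar> * norm (v i))" by simp
        also have "\<dots> \<le> real d * Cg" using mi by (intro mult_left_mono) auto
        finally show "norm (of_int (m i) *\<^sub>R a i) \<le> real d * Cg" .
      qed
      also have "\<dots> = real (d - s) * (real d * Cg)" unfolding I_def by simp
      also have "\<dots> \<le> real d * (real d * Cg)"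
        using Bc_pos unfolding Cg_def by (intro mult_right_mono) auto
      also have "\<dots> \<le> real r" using r(1) unfolding d_def by (simp add: mult.assoc)
      finally show ?thesis .
    qed
    ultimately show "z \<in> L \<inter> N \<inter> cball 0 (real r)" by simp
  qed
  have injI: "inj_on a I" using indep_seq_inj[OF a_indep] Id unfolding d_def by (rule inj_on_subset)
  have latN: "lattice_in N (L \<inter> N)"
    unfolding lattice_in_def lattice_of_rank_def
  proof (intro conjI exI[of _ "a ` I"])
    show "L \<inter> N \<subseteq> N" by simp
    show "finite (a ` I)" unfolding I_def by simp
    show "independent (a ` I)" using indI by simp
    show "card (a ` I) = dim N" using indI dimN by simp
    show "L \<inter> N = {\<Sum>b\<in>a ` I. of_int (c b) *\<^sub>R b | c. True}"
    proof (intro set_eqI iffI)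
      fix x assume x: "x \<in> L \<inter> N"
      obtain m :: "nat \<Rightarrow> int" where m: "x = (\<Sum>i<d. of_int (m i) *\<^sub>R a i)"
        using a_int_rep x unfolding d_def by blast
      obtain \<beta> where \<beta>: "x = (\<Sum>i\<in>I. \<beta> i *\<^sub>R a i)" using Nrep x by blast
      have "(\<Sum>i\<in>{..<d}. of_int (m i) *\<^sub>R a i) = (\<Sum>i\<in>I. \<beta> i *\<^sub>R a i)" using m \<beta> by simp
      then have m0: "real_of_int (m k) = 0" if "k < s" for k
        using coef_zero[of "{..<d}" I "\<lambda>i. of_int (m i)" \<beta> k] Id that s unfolding d_def I_def by auto
      have "x = (\<Sum>i<s. of_int (m i) *\<^sub>R a i) + (\<Sum>i\<in>I. of_int (m i) *\<^sub>R a i)" by (rule decomp[OF m])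
      then have "x = (\<Sum>i\<in>I. of_int (m i) *\<^sub>R a i)" using m0 by simp
      also have "\<dots> = (\<Sum>b\<in>a ` I. of_int ((\<lambda>b. m (inv_into I a b)) b) *\<^sub>R b)"
        using injI by (simp add: sum.reindex inv_into_f_f)
      finally show "x \<in> {\<Sum>b\<in>a ` I. of_int (c b) *\<^sub>R b | c. True}" by (rule memI)
    next
      fix x assume "x \<in> {\<Sum>b\<in>a ` I. of_int (c b) *\<^sub>R b | c. True}"
      then obtain c where c: "x = (\<Sum>b\<in>a ` I. of_int (c b) *\<^sub>R b)" by blast
      have "x = (\<Sum>i\<in>I. of_int (c (a i)) *\<^sub>R a i)" using c injI by (simp add: sum.reindex)
      then have "x \<in> L" using aL Id by (auto intro!: L_sum simp: I_def)
      moreover have "x \<in> N" unfolding c N_def by (intro span_sum span_scale span_base) auto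
      ultimately show "x \<in> L \<inter> N" by simp
    qed
  qed
  have minima: "1 / real r * succ_min (i + s) L (cball 0 1) \<le> succ_min i (L \<inter> N) (cball 0 (real r) \<inter> N) \<and>
      succ_min i (L \<inter> N) (cball 0 (real r) \<inter> N) \<le> real d / real r * succ_min (i + s) L (cball 0 1)"
    if i: "i \<in> {1..d - s}" for i
  proof -
    define j where "j = i + s - 1"
    have j: "j < d" "Suc j = i + s" "s \<le> j" using i s unfolding j_def d_def by auto
    have sm: "succ_min (i + s) L (cball 0 1) = norm (v j)"
      using succ_min_v[of j] j unfolding d_def by simp
    have vpos: "norm (v j) > 0" using v_pos j unfolding d_def by simp
    have rpos: "real r > 0" using r by simp
    define T where "T = {t. t > 0 \<and> i \<le> dim (L \<inter> N \<inter> (cball 0 (t * real r) \<inter> N))}"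
    have Teq: "{t. t > 0 \<and> dim ((L \<inter> N) \<inter> ((\<lambda>x. t *\<^sub>R x) ` (cball 0 (real r) \<inter> N))) \<ge> i} = T"
      unfolding T_def by (intro Collect_cong conj_cong refl) (simp add: scale_cball_subspace[OF _ subN])
    define t0 where "t0 = real d * norm (v j) / real r"
    have t0T: "t0 \<in> T"
    proof -
      have t0p: "t0 > 0" unfolding t0_def using vpos rpos j by simp
      have sub: "a ` {s..<s+i} \<subseteq> L \<inter> N \<inter> (cball 0 (t0 * real r) \<inter> N)"
      proof
        fix x assume "x \<in> a ` {s..<s+i}"
        then obtain k where k: "s \<le> k" "k < s + i" "x = a k" by auto
        have kd: "k < d" using k j by simp
        have "x \<in> L" using aL kd k by simp
        moreover have "x \<in> N" unfolding N_def I_def using k kd by (intro span_base) auto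
        moreover have "norm x \<le> t0 * real r"
        proof -
          have "norm x \<le> real d * norm (v k)" using a_norm kd k unfolding d_def by simp
          also have "\<dots> \<le> real d * norm (v j)" using v_mono[of k j] k j unfolding d_def j_def
            by (intro mult_left_mono) auto
          also have "\<dots> = t0 * real r" unfolding t0_def using rpos by simp
          finally show ?thesis .
        qed
        ultimately show "x \<in> L \<inter> N \<inter> (cball 0 (t0 * real r) \<inter> N)" by simp
      qed
      have sub2: "{s..<s+i} \<subseteq> {..<DIM('a)}" using j unfolding d_def by auto
      have "independent (a ` {s..<s+i})" "card (a ` {s..<s+i}) = i"
        using indep_seq_independent[OF a_indep sub2] by auto
      then have "i \<le> dim (L \<inter> N \<inter> (cball 0 (t0 * real r) \<inter> N))"
        using independent_card_le_dim[OF sub] by simp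
      then show ?thesis unfolding T_def using t0p by simp
    qed
    have lowT: "norm (v j) / real r \<le> t" if t: "t \<in> T" for t
    proof -
      have tp: "t > 0" and dt: "i \<le> dim (L \<inter> N \<inter> (cball 0 (t * real r) \<inter> N))" using t unfolding T_def by auto
      have "\<not> (L \<inter> N \<inter> (cball 0 (t * real r) \<inter> N) \<subseteq> span (v ` {..<j}))"
      proof
        assume H: "L \<inter> N \<inter> (cball 0 (t * real r) \<inter> N) \<subseteq> span (v ` {..<j})"
        have "L \<inter> N \<inter> (cball 0 (t * real r) \<inter> N) \<subseteq> span (a ` {s..<j})"
        proof
          fix x assume x: "x \<in> L \<inter> N \<inter> (cball 0 (t * real r) \<inter> N)"
          then have "x \<in> span (a ` {..<j})" using H a_span_eq[of j] j unfolding d_def by auto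
          then obtain \<alpha> where \<alpha>: "x = (\<Sum>k<j. \<alpha> k *\<^sub>R a k)" using span_lessThan_sum by blast
          obtain \<beta> where \<beta>: "x = (\<Sum>k\<in>I. \<beta> k *\<^sub>R a k)" using Nrep x by blast
          have jd: "{..<j} \<subseteq> {..<DIM('a)}" using j unfolding d_def by auto
          have a0: "\<alpha> k = 0" if "k < s" for k
            using coef_zero[OF jd Id[unfolded d_def], of \<alpha> \<beta> k] \<alpha> \<beta> that j unfolding I_def by auto
          have "x = (\<Sum>k<s. \<alpha> k *\<^sub>R a k) + (\<Sum>k\<in>{s..<j}. \<alpha> k *\<^sub>R a k)"
            using \<alpha> sum_split_at[of s j "\<lambda>k. \<alpha> k *\<^sub>R a k"] j by simp
          then have "x = (\<Sum>k\<in>{s..<j}. \<alpha> k *\<^sub>R a k)" using a0 by simp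
          then show "x \<in> span (a ` {s..<j})" using span_image_sum[of "{s..<j}" a] by auto
        qed
        then have "dim (L \<inter> N \<inter> (cball 0 (t * real r) \<inter> N)) \<le> dim (span (a ` {s..<j}))" by (rule dim_subset)
        also have "\<dots> = j - s"
        proof -
          have sub3: "{s..<j} \<subseteq> {..<DIM('a)}" using j unfolding d_def by auto
          show ?thesis using indep_seq_independent[OF a_indep sub3]
              dim_span_eq_card_independent[of "a ` {s..<j}"] by simp
        qed
        finally have "dim (L \<inter> N \<inter> (cball 0 (t * real r) \<inter> N)) \<le> j - s" .
        moreover have "i \<ge> 1" using i by simp
        ultimately show False using dt j(2) by linarith
      qed
      then obtain w where w0: "w \<in> L \<inter> N \<inter> (cball 0 (t * real r) \<inter> N)" "w \<notin> span (v ` {..<j})" by blast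
      then have w: "w \<in> L" "norm w \<le> t * real r" "w \<notin> span (v ` {..<j})" by auto
      have "norm (v j) \<le> t * real r" using vmin[of j w] w j unfolding d_def by simp
      then show ?thesis using rpos by (simp add: divide_le_eq)
    qed
    have bdd: "bdd_below T" unfolding T_def by (rule bdd_belowI[of _ 0]) auto
    have up: "Inf T \<le> t0" using cInf_lower[OF t0T bdd] .
    have lo: "norm (v j) / real r \<le> Inf T" using t0T lowT by (intro cInf_greatest) auto
    have smN: "succ_min i (L \<inter> N) (cball 0 (real r) \<inter> N) = Inf T" unfolding succ_min_def Teq ..
    show ?thesis unfolding smN sm using up lo unfolding t0_def by simp
  qed
  show ?thesis
    apply (rule exI[of _ a], rule exI[of _ N])
    using aL subN dimN inter0 sumU latN projsub minima s unfolding d_def by auto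
qed

end


theorem lemma1:
  fixes s :: nat
  assumes "s \<le> DIM('a::euclidean_space) - 1"
  shows "\<exists>(r::nat) (c1::real) c2. r > 0 \<and> 0 < c1 \<and> c1 \<le> c2 \<and>
    (\<forall>\<Lambda> :: 'a set. full_lattice \<Lambda> \<and> succ_min DIM('a) \<Lambda> (cball 0 1) \<le> 1 \<longrightarrow>
      (\<exists>(b :: nat \<Rightarrow> 'a) N.
         (\<forall>j<s. b j \<in> \<Lambda>) \<and>
         subspace N \<and> dim N = DIM('a) - s \<and>
         span (b ` {..<s}) \<inter> N = {0} \<and>
         {x + y | x y. x \<in> span (b ` {..<s}) \<and> y \<in> N} = UNIV \<and>
         lattice_in N (\<Lambda> \<inter> N) \<and>
         proj_along N (b ` {..<s}) ` (\<Lambda> \<inter> cball 0 1) \<subseteq> \<Lambda> \<inter> N \<inter> cball 0 (real r) \<and>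
         (\<forall>i\<in>{1..DIM('a) - s}.
            c1 * succ_min (i + s) \<Lambda> (cball 0 1) \<le> succ_min i (\<Lambda> \<inter> N) (cball 0 (real r) \<inter> N) \<and>
            succ_min i (\<Lambda> \<inter> N) (cball 0 (real r) \<inter> N) \<le> c2 * succ_min (i + s) \<Lambda> (cball 0 1))))"
  proof -
  define d where "d = DIM('a)"
  define B0 :: real where "B0 = 2 * real ((2 * d) ^ d)"
  define G0 where "G0 = B0 * (1 + real d * B0) ^ d"
  define r :: nat where "r = nat \<lceil>real d * real d * G0\<rceil> + 1"
  have rpos: "r > 0" unfolding r_def by simp
  have rge: "real d * real d * G0 \<le> real r"
    using real_nat_ceiling_ge[of "real d * real d * G0"] unfolding r_def by simp
  have d1: "1 \<le> DIM('a)" by (simp add: DIM_positive Suc_leI)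
  have s': "s < DIM('a)" using assms d1 by linarith
  have c12: "1 / real r \<le> real DIM('a) / real r" using rpos d1 by (simp add: divide_right_mono)
  have c1: "0 < 1 / real r" using rpos by simp
  have main_all: "\<forall>\<Lambda> :: 'a set. full_lattice \<Lambda> \<and> succ_min DIM('a) \<Lambda> (cball 0 1) \<le> 1 \<longrightarrow>
      (\<exists>(b :: nat \<Rightarrow> 'a) N.
         (\<forall>j<s. b j \<in> \<Lambda>) \<and>
         subspace N \<and> dim N = DIM('a) - s \<and>
         span (b ` {..<s}) \<inter> N = {0} \<and>
         {x + y | x y. x \<in> span (b ` {..<s}) \<and> y \<in> N} = UNIV \<and>
         lattice_in N (\<Lambda> \<inter> N) \<and>
         proj_along N (b ` {..<s}) ` (\<Lambda> \<inter> cball 0 1) \<subseteq> \<Lambda> \<inter> N \<inter> cball 0 (real r) \<and>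
         (\<forall>i\<in>{1..DIM('a) - s}.
            1 / real r * succ_min (i + s) \<Lambda> (cball 0 1) \<le> succ_min i (\<Lambda> \<inter> N) (cball 0 (real r) \<inter> N) \<and>
            succ_min i (\<Lambda> \<inter> N) (cball 0 (real r) \<inter> N) \<le> real DIM('a) / real r * succ_min (i + s) \<Lambda> (cball 0 1)))"
  proof (intro allI impI)
    fix \<Lambda> :: "'a set"
    assume H: "full_lattice \<Lambda> \<and> succ_min DIM('a) \<Lambda> (cball 0 1) \<le> 1"
    interpret lat \<Lambda> using H by unfold_locales simp
    obtain v where v: "\<forall>k<DIM('a). v k \<in> \<Lambda> \<and> v k \<notin> span (v ` {..<k}) \<and>
      (\<forall>w\<in>\<Lambda>. w \<notin> span (v ` {..<k}) \<longrightarrow> norm (v k) \<le> norm w)"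
      using greedy by blast
    interpret lat_v \<Lambda> v by unfold_locales (use v in auto)
    have "Cg = G0" unfolding Cg_def Bc_def G0_def B0_def d_def ..
    then have "real DIM('a) * real DIM('a) * Cg \<le> real r" using rge unfolding d_def by simp
    from main[OF s' this rpos]
    show "\<exists>(b :: nat \<Rightarrow> 'a) N.
         (\<forall>j<s. b j \<in> \<Lambda>) \<and>
         subspace N \<and> dim N = DIM('a) - s \<and>
         span (b ` {..<s}) \<inter> N = {0} \<and>
         {x + y | x y. x \<in> span (b ` {..<s}) \<and> y \<in> N} = UNIV \<and>
         lattice_in N (\<Lambda> \<inter> N) \<and>
         proj_along N (b ` {..<s}) ` (\<Lambda> \<inter> cball 0 1) \<subseteq> \<Lambda> \<inter> N \<inter> cball 0 (real r) \<and>
         (\<forall>i\<in>{1..DIM('a) - s}.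
            1 / real r * succ_min (i + s) \<Lambda> (cball 0 1) \<le> succ_min i (\<Lambda> \<inter> N) (cball 0 (real r) \<inter> N) \<and>
            succ_min i (\<Lambda> \<inter> N) (cball 0 (real r) \<inter> N) \<le> real DIM('a) / real r * succ_min (i + s) \<Lambda> (cball 0 1))" .
  qed
  show ?thesis
    by (rule exI[of _ r], rule exI[of _ "1 / real r"], rule exI[of _ "real DIM('a) / real r"])
       (use rpos c1 c12 main_all in blast)
qed


end
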